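(* Let $q$ be a vertex-labelled query hypergraph with labelling $l_q$ and $H$ a vertex-labelled data hypergraph with labelling $l_H$. Let $q'$ be a partial query of $q$ with hyperedges $e_1,\dots,e_k$ (in matching order), and let $e_{q'}=e_k$ be its last hyperedge. Let $m'$ be a partial embedding of $q'$, i.e. an injective assignment $f(e_i)\in E(H)$ ($1\le i\le k$), and write $e_{m'}=f(e_k)$. Assume that the partial embedding $m=(f(e_1),\dots,f(e_{k-1}))$ is a valid embedding of the partial query $q''$ formed by $e_1,\dots,e_{k-1}$. Then $m'$ is a valid embedding of $q'$ if and only if the two multisets $$\{\mathcal{P}_{q'\rightarrow m'}(u) : u\in e_{q'}\} \quad\text{and}\quad \{\mathcal{P}(v) : v\in e_{m'}\}$$ are equal.
   Context: A hypergraph consists of a vertex set and a set of hyperedges, each a nonempty subset of the vertex set; vertices carry labels. A partial query $q'$ is the subhypergraph of $q$ formed by a set of query hyperedges together with the vertices they contain. For a partial embedding $m'$ (an injective map $f$ from $E(q')$ to $E(H)$), $H_{m'}$ denotes the subhypergraph of $H$ consisting of the data hyperedges $f(e)$, $e\in E(q')$, and the vertices they contain. The partial embedding $m'$ is valid (an embedding of $q'$) if there exists a bijection $g:V(q')\to V(H_{m'})$ with $l_H(g(u))=l_q(u)$ for all $u\in V(q')$ and $g(e)=f(e)$ (as vertex sets) for every $e\in E(q')$. For a data vertex $v\in V(H_{m'})$, its vertex profile is $\mathcal{P}(v)=(l_H(v),\, he_{H_{m'}}(v))$, where $he_{H_{m'}}(v)$ is the set of hyperedges of $H_{m'}$ containing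 $v$. For a query vertex $u\in V(q')$, $\mathcal{P}_{q'\rightarrow m'}(u)=(l_q(u),\,\{f(e): e\in he_{q'}(u)\})$, where $he_{q'}(u)$ is the set of hyperedges of $q'$ containing $u$. *)

theory Defs
  imports Main "HOL-Library.Multiset"
begin

definition hypergraph :: "'a set \<Rightarrow> 'a set set \<Rightarrow> bool" where
  "hypergraph V E \<longleftrightarrow> finite V \<and> (\<forall>e\<in>E. e \<noteq> {} \<and> e \<subseteq> V)"

text \<open>A partial query is given by the list es of its query hyperedges (in matching order);
  a partial embedding by the list fs of the images, fs!i = f(es!i).\<close>
definition valid_embedding ::
  "('u \<Rightarrow> 'l) \<Rightarrow> ('v \<Rightarrow> 'l) \<Rightarrow> 'u set list \<Rightarrow> 'v set list \<Rightarrow> bool" where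
  "valid_embedding lq lH es fs \<longleftrightarrow>
     (\<exists>g. bij_betw g (\<Union>(set es)) (\<Union>(set fs))
        \<and> (\<forall>u\<in>\<Union>(set es). lH (g u) = lq u)
        \<and> (\<forall>i<length es. g ` (es!i) = fs!i))"

definition data_profile :: "('v \<Rightarrow> 'l) \<Rightarrow> 'v set list \<Rightarrow> 'v \<Rightarrow> 'l \<times> 'v set set" where
  "data_profile lH fs v = (lH v, {e \<in> set fs. v \<in> e})"

definition query_profile ::
  "('u \<Rightarrow> 'l) \<Rightarrow> 'u set list \<Rightarrow> 'v set list \<Rightarrow> 'u \<Rightarrow> 'l \<times> 'v set set" where
  "query_profile lq es fs u = (lq u, {fs!i | i. i < length es \<and> u \<in> es!i})"

end

theory Submission
  imports Defs
begin

lemma count_img_mset_set: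
  assumes "finite A"
  shows "count (image_mset P (mset_set A)) p = card {a\<in>A. P a = p}"
proof -
  have "count (image_mset P (mset_set A)) p = sum (count (mset_set A)) (P -` {p} \<inter> A)"
    using assms by (simp add: count_image_mset)
  also have "\<dots> = sum (\<lambda>_. 1) (P -` {p} \<inter> A)"
    using assms by (intro sum.cong) auto
  also have "\<dots> = card {a\<in>A. P a = p}" by (simp add: Int_commute vimage_def Collect_conj_eq)
  finally show ?thesis .
qed

lemma mset_bij:
  assumes "finite A" "finite B" "image_mset P (mset_set A) = image_mset Q (mset_set B)"
  shows "\<exists>g. bij_betw g A B \<and> (\<forall>a\<in>A. Q (g a) = P a)"
proof -
  have "card {a\<in>A. P a = p} = card {b\<in>B. Q b = p}" for p
    using count_img_mset_set[OF assms(1), of P p] count_img_mset_set[OF assms(2), of Q p] assms(3)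
    by simp
  then have "\<forall>p. \<exists>h. bij_betw h {a\<in>A. P a = p} {b\<in>B. Q b = p}"
    using assms(1,2) by (intro allI finite_same_card_bij) auto
  then obtain h where h: "\<And>p. bij_betw (h p) {a\<in>A. P a = p} {b\<in>B. Q b = p}" by metis
  define g where "g a = h (P a) a" for a
  have img: "g a \<in> B \<and> Q (g a) = P a" if "a \<in> A" for a
    using bij_betwE[OF h[of "P a"]] that unfolding g_def by auto
  have "inj_on g A"
  proof
    fix a a' assume aa: "a \<in> A" "a' \<in> A" "g a = g a'"
    then have "P a = P a'" using img by metis
    then show "a = a'" using aa bij_betw_imp_inj_on[OF h[of "P a"]] unfolding g_def
      by (auto simp: inj_on_def)
  qed
  moreover have "g ` A = B"
  proof
    show "g ` A \<subseteq> B" using img by auto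
    show "B \<subseteq> g ` A"
    proof
      fix b assume "b \<in> B"
      then have "b \<in> h (Q b) ` {a\<in>A. P a = Q b}" using bij_betw_imp_surj_on[OF h[of "Q b"]] by auto
      then obtain a where "a \<in> A" "P a = Q b" "b = h (Q b) a" by auto
      then have "b = g a" unfolding g_def by simp
      then show "b \<in> g ` A" using \<open>a \<in> A\<close> by blast
    qed
  qed
  ultimately show ?thesis using img unfolding bij_betw_def by auto
qed

theorem mainTheorem1:
  fixes Vq :: "'u set" and Eq :: "'u set set" and lq :: "'u \<Rightarrow> 'l"
    and VH :: "'v set" and EH :: "'v set set" and lH :: "'v \<Rightarrow> 'l"
    and es :: "'u set list" and fs :: "'v set list"
  assumes "hypergraph Vq Eq" and "hypergraph VH EH"
    and "es \<noteq> []" and "distinct es" and "set es \<subseteq> Eq"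
    and "length fs = length es" and "distinct fs" and "set fs \<subseteq> EH"
    and "valid_embedding lq lH (butlast es) (butlast fs)"
  shows "valid_embedding lq lH es fs \<longleftrightarrow>
    image_mset (query_profile lq es fs) (mset_set (last es))
      = image_mset (data_profile lH fs) (mset_set (last fs))"
proof -
  define k where "k = length es"
  define n where "n = k - 1"
  have kn: "k = Suc n" using assms(3) unfolding k_def n_def by (cases es) auto
  have lfs: "length fs = k" using assms(6) k_def by simp
  have fsne: "fs \<noteq> []" using lfs kn by auto
  have lastes: "last es = es ! n" using assms(3) unfolding n_def k_def by (simp add: last_conv_nth)
  have lastfs: "last fs = fs ! n" using fsne lfs unfolding n_def by (simp add: last_conv_nth)
  have lbes: "length (butlast es) = n" unfolding n_def k_def by simp
  have lbfs: "length (butlast fs) = n" using lfs unfolding n_def by simp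
  have nbes: "butlast es ! i = es ! i" if "i < n" for i using that lbes by (simp add: nth_butlast)
  have nbfs: "butlast fs ! i = fs ! i" if "i < n" for i using that lbfs by (simp add: nth_butlast)
  have finq: "finite (es ! i)" if "i < k" for i
  proof -
    have "es ! i \<in> Eq" using assms(5) that k_def nth_mem by blast
    then show ?thesis using assms(1) unfolding hypergraph_def by (meson finite_subset)
  qed
  have find: "finite (fs ! i)" if "i < k" for i
  proof -
    have "fs ! i \<in> EH" using assms(8) that lfs nth_mem by blast
    then show ?thesis using assms(2) unfolding hypergraph_def by (meson finite_subset)
  qed
  define U where "U = \<Union>(set es)"
  define W where "W = \<Union>(set fs)"
  define U2 where "U2 = \<Union>(set (butlast es))"
  define W2 where "W2 = \<Union>(set (butlast fs))"
  have Ueq: "U = (\<Union>i<k. es ! i)" unfolding U_def k_def by (auto simp: set_conv_nth)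
  have Weq: "W = (\<Union>i<k. fs ! i)" unfolding W_def using lfs by (auto simp: set_conv_nth)
  have U2eq: "U2 = (\<Union>i<n. es ! i)" unfolding U2_def using lbes nbes
    by (auto simp: set_conv_nth)
  have W2eq: "W2 = (\<Union>i<n. fs ! i)" unfolding W2_def using lbfs nbfs
    by (auto simp: set_conv_nth)
  have finU: "finite U" using Ueq finq by auto
  have finW: "finite W" using Weq find by auto
  have finU2: "finite U2" using U2eq finq kn by auto
  have finW2: "finite W2" using W2eq find kn by auto
  have finen: "finite (es ! n)" and finfn: "finite (fs ! n)" using finq find kn by auto
  have enU: "es ! n \<subseteq> U" using Ueq kn by auto
  have fnW: "fs ! n \<subseteq> W" using Weq kn by auto
  define Pq where "Pq u = (lq u, {i. i < k \<and> u \<in> es ! i})" for u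
  define Pd where "Pd v = (lH v, {i. i < k \<and> v \<in> fs ! i})" for v
  define F :: "'l \<times> nat set \<Rightarrow> 'l \<times> 'v set set" where "F p = (fst p, (\<lambda>i. fs ! i) ` snd p)" for p
  define G :: "'l \<times> 'v set set \<Rightarrow> 'l \<times> nat set" where "G p = (fst p, {i. i < k \<and> fs ! i \<in> snd p})" for p
  have qF: "query_profile lq es fs u = F (Pq u)" for u
    unfolding query_profile_def F_def Pq_def k_def by auto
  have dF: "data_profile lH fs v = F (Pd v)" for v
    unfolding data_profile_def F_def Pd_def using lfs by (auto simp: set_conv_nth)
  have qF': "query_profile lq es fs = (\<lambda>u. F (Pq u))" using qF by auto
  have dF': "data_profile lH fs = (\<lambda>u. F (Pd u))" using dF by auto
  have GF: "G (F p) = p" if "snd p \<subseteq> {..<k}" for p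
  proof -
    have "{i. i < k \<and> fs ! i \<in> (\<lambda>i. fs ! i) ` snd p} = snd p"
    proof safe
      fix i j assume "i < k" "fs ! i = fs ! j" "j \<in> snd p"
      then show "i \<in> snd p" using that assms(7) lfs by (metis lessThan_iff nth_eq_iff_index_eq subsetD)
    qed (use that in auto)
    then show ?thesis unfolding G_def F_def by simp
  qed
  have GFq: "G (F (Pq u)) = Pq u" for u by (rule GF) (auto simp: Pq_def)
  have GFd: "G (F (Pd u)) = Pd u" for u by (rule GF) (auto simp: Pd_def)
  have equivM: "(image_mset (query_profile lq es fs) (mset_set (last es))
      = image_mset (data_profile lH fs) (mset_set (last fs))) \<longleftrightarrow>
      image_mset Pq (mset_set (es ! n)) = image_mset Pd (mset_set (fs ! n))"
  proof
    assume h: "image_mset (query_profile lq es fs) (mset_set (last es))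
      = image_mset (data_profile lH fs) (mset_set (last fs))"
    have "image_mset Pq (mset_set (es ! n)) = image_mset G (image_mset (query_profile lq es fs) (mset_set (last es)))"
      by (simp add: image_mset.compositionality o_def qF' GFq lastes)
    also have "\<dots> = image_mset G (image_mset (data_profile lH fs) (mset_set (last fs)))" using h by simp
    also have "\<dots> = image_mset Pd (mset_set (fs ! n))"
      by (simp add: image_mset.compositionality o_def dF' GFd lastfs)
    finally show "image_mset Pq (mset_set (es ! n)) = image_mset Pd (mset_set (fs ! n))" .
  next
    assume h: "image_mset Pq (mset_set (es ! n)) = image_mset Pd (mset_set (fs ! n))"
    have "image_mset (query_profile lq es fs) (mset_set (last es)) = image_mset F (image_mset Pq (mset_set (es ! n)))"
      by (simp add: image_mset.compositionality o_def qF' lastes)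
    also have "\<dots> = image_mset F (image_mset Pd (mset_set (fs ! n)))" using h by simp
    also have "\<dots> = image_mset (data_profile lH fs) (mset_set (last fs))"
      by (simp add: image_mset.compositionality o_def dF' lastfs)
    finally show "image_mset (query_profile lq es fs) (mset_set (last es))
      = image_mset (data_profile lH fs) (mset_set (last fs))" .
  qed
  show ?thesis
  proof
    assume "valid_embedding lq lH es fs"
    then obtain g where g: "bij_betw g U W" "\<forall>u\<in>U. lH (g u) = lq u" "\<forall>i<k. g ` (es!i) = fs!i"
      unfolding valid_embedding_def U_def W_def k_def by blast
    have ginj: "inj_on g U" using g(1) bij_betw_def by blast
    have PdPq: "Pd (g u) = Pq u" if "u \<in> U" for u
    proof -
      have "g u \<in> fs ! i \<longleftrightarrow> u \<in> es ! i" if "i < k" for i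
      proof
        assume "g u \<in> fs ! i"
        then obtain u' where "u' \<in> es ! i" "g u' = g u" using g(3) \<open>i < k\<close> by force
        moreover have "u' \<in> U" using \<open>u' \<in> es ! i\<close> Ueq \<open>i < k\<close> by auto
        ultimately show "u \<in> es ! i" using ginj \<open>u \<in> U\<close> by (metis inj_onD)
      qed (use g(3) \<open>i < k\<close> in auto)
      then show ?thesis unfolding Pd_def Pq_def using g(2) that by auto
    qed
    have "mset_set (fs ! n) = image_mset g (mset_set (es ! n))"
      using g(3) kn inj_on_subset[OF ginj enU] by (simp add: image_mset_mset_set)
    then have "image_mset Pd (mset_set (fs ! n)) = image_mset Pq (mset_set (es ! n))"
      using PdPq enU finen by (auto simp: image_mset.compositionality o_def intro!: image_mset_cong)
    then show "image_mset (query_profile lq es fs) (mset_set (last es))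
      = image_mset (data_profile lH fs) (mset_set (last fs))" using equivM by simp
  next
    assume "image_mset (query_profile lq es fs) (mset_set (last es))
      = image_mset (data_profile lH fs) (mset_set (last fs))"
    then have M: "image_mset Pq (mset_set (es ! n)) = image_mset Pd (mset_set (fs ! n))" using equivM by simp
    obtain g0 where g0: "bij_betw g0 U2 W2" "\<forall>u\<in>U2. lH (g0 u) = lq u" "\<forall>i<n. g0 ` (es!i) = fs!i"
      using assms(9) unfolding valid_embedding_def U2_def W2_def lbes using nbes nbfs by auto
    have g0inj: "inj_on g0 U2" using g0(1) bij_betw_def by blast
    define Pq2 where "Pq2 u = (lq u, {i. i < n \<and> u \<in> es ! i})" for u
    define Pd2 where "Pd2 v = (lH v, {i. i < n \<and> v \<in> fs ! i})" for v
    have P2: "Pd2 (g0 u) = Pq2 u" if "u \<in> U2" for u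
    proof -
      have "g0 u \<in> fs ! i \<longleftrightarrow> u \<in> es ! i" if "i < n" for i
      proof
        assume "g0 u \<in> fs ! i"
        then obtain u' where "u' \<in> es ! i" "g0 u' = g0 u" using g0(3) \<open>i < n\<close> by force
        moreover have "u' \<in> U2" using \<open>u' \<in> es ! i\<close> U2eq \<open>i < n\<close> by auto
        ultimately show "u \<in> es ! i" using g0inj \<open>u \<in> U2\<close> by (metis inj_onD)
      qed (use g0(3) \<open>i < n\<close> in auto)
      then show ?thesis unfolding Pd2_def Pq2_def using g0(2) that by auto
    qed
    have A: "image_mset Pq2 (mset_set U2) = image_mset Pd2 (mset_set W2)"
    proof -
      have "mset_set W2 = image_mset g0 (mset_set U2)"
        using g0(1) g0inj by (simp add: image_mset_mset_set bij_betw_def)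
      then show ?thesis using P2 finU2 by (auto simp: image_mset.compositionality o_def intro!: image_mset_cong)
    qed
    define \<Gamma> :: "'l \<times> nat set \<Rightarrow> 'l \<times> nat set" where "\<Gamma> p = (fst p, snd p - {n})" for p
    have Gq: "Pq2 u = \<Gamma> (Pq u)" for u unfolding Pq2_def Pq_def \<Gamma>_def using kn by auto
    have Gd: "Pd2 u = \<Gamma> (Pd u)" for u unfolding Pd2_def Pd_def \<Gamma>_def using kn by auto
    have Gq': "Pq2 = (\<lambda>u. \<Gamma> (Pq u))" using Gq by auto
    have Gd': "Pd2 = (\<lambda>u. \<Gamma> (Pd u))" using Gd by auto
    have U2iff: "u \<in> U2 \<longleftrightarrow> snd (Pq2 u) \<noteq> {}" for u unfolding U2eq Pq2_def by auto
    have W2iff: "v \<in> W2 \<longleftrightarrow> snd (Pd2 v) \<noteq> {}" for v unfolding W2eq Pd2_def by auto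
    have Xq: "image_mset Pq2 (mset_set (U2 \<inter> es ! n)) = filter_mset (\<lambda>p. snd p \<noteq> {}) (image_mset \<Gamma> (image_mset Pq (mset_set (es ! n))))"
    proof -
      have "mset_set (U2 \<inter> es ! n) = filter_mset (\<lambda>u. snd (Pq2 u) \<noteq> {}) (mset_set (es ! n))"
      proof -
        have "U2 \<inter> es ! n = {u \<in> es ! n. snd (Pq2 u) \<noteq> {}}" using U2iff by blast
        then show ?thesis using finen by (simp add: filter_mset_mset_set)
      qed
      then show ?thesis by (simp add: filter_mset_image_mset image_mset.compositionality o_def Gq')
    qed
    have Xd: "image_mset Pd2 (mset_set (W2 \<inter> fs ! n)) = filter_mset (\<lambda>p. snd p \<noteq> {}) (image_mset \<Gamma> (image_mset Pd (mset_set (fs ! n))))"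
    proof -
      have "mset_set (W2 \<inter> fs ! n) = filter_mset (\<lambda>u. snd (Pd2 u) \<noteq> {}) (mset_set (fs ! n))"
      proof -
        have "W2 \<inter> fs ! n = {u \<in> fs ! n. snd (Pd2 u) \<noteq> {}}" using W2iff by blast
        then show ?thesis using finfn by (simp add: filter_mset_mset_set)
      qed
      then show ?thesis by (simp add: filter_mset_image_mset image_mset.compositionality o_def Gd')
    qed
    have U2dec: "mset_set U2 = mset_set (U - es ! n) + mset_set (U2 \<inter> es ! n)"
    proof -
      have "U2 = (U - es ! n) \<union> (U2 \<inter> es ! n)" using U2eq Ueq kn by (auto simp: less_Suc_eq)
      moreover have "mset_set ((U - es ! n) \<union> (U2 \<inter> es ! n)) = mset_set (U - es ! n) + mset_set (U2 \<inter> es ! n)"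
        by (rule mset_set_Union) (use finU finU2 in auto)
      ultimately show ?thesis by simp
    qed
    have W2dec: "mset_set W2 = mset_set (W - fs ! n) + mset_set (W2 \<inter> fs ! n)"
    proof -
      have "W2 = (W - fs ! n) \<union> (W2 \<inter> fs ! n)" using W2eq Weq kn by (auto simp: less_Suc_eq)
      moreover have "mset_set ((W - fs ! n) \<union> (W2 \<inter> fs ! n)) = mset_set (W - fs ! n) + mset_set (W2 \<inter> fs ! n)"
        by (rule mset_set_Union) (use finW finW2 in auto)
      ultimately show ?thesis by simp
    qed
    have Udec: "mset_set U = mset_set (U - es ! n) + mset_set (es ! n)"
    proof -
      have "U = (U - es ! n) \<union> es ! n" using enU by blast
      moreover have "mset_set ((U - es ! n) \<union> es ! n) = mset_set (U - es ! n) + mset_set (es ! n)"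
        by (rule mset_set_Union) (use finU finen in auto)
      ultimately show ?thesis by simp
    qed
    have Wdec: "mset_set W = mset_set (W - fs ! n) + mset_set (fs ! n)"
    proof -
      have "W = (W - fs ! n) \<union> fs ! n" using fnW by blast
      moreover have "mset_set ((W - fs ! n) \<union> fs ! n) = mset_set (W - fs ! n) + mset_set (fs ! n)"
        by (rule mset_set_Union) (use finW finfn in auto)
      ultimately show ?thesis by simp
    qed
    have Rq: "image_mset Pq2 (mset_set (U - es ! n)) = image_mset Pq (mset_set (U - es ! n))"
      using finU by (intro image_mset_cong) (auto simp: Pq2_def Pq_def kn less_Suc_eq)
    have Rd: "image_mset Pd2 (mset_set (W - fs ! n)) = image_mset Pd (mset_set (W - fs ! n))"
      using finW by (intro image_mset_cong) (auto simp: Pd2_def Pd_def kn less_Suc_eq)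
    have R: "image_mset Pq (mset_set (U - es ! n)) = image_mset Pd (mset_set (W - fs ! n))"
      using A U2dec W2dec Xq Xd Rq Rd M by simp
    have "image_mset Pq (mset_set U) = image_mset Pd (mset_set W)"
      using R M Udec Wdec by simp
    then obtain g where g: "bij_betw g U W" "\<forall>u\<in>U. Pd (g u) = Pq u"
      using mset_bij[OF finU finW] by blast
    have "\<forall>u\<in>U. lH (g u) = lq u" using g(2) unfolding Pd_def Pq_def by auto
    moreover have "g ` (es ! i) = fs ! i" if "i < k" for i
    proof
      show "g ` (es ! i) \<subseteq> fs ! i"
      proof
        fix v assume "v \<in> g ` (es ! i)"
        then obtain u where u: "u \<in> es ! i" "v = g u" by auto
        then have "u \<in> U" using Ueq that by auto
        then have "snd (Pd (g u)) = snd (Pq u)" using g(2) by simp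
        then show "v \<in> fs ! i" using u that unfolding Pd_def Pq_def by auto
      qed
      show "fs ! i \<subseteq> g ` (es ! i)"
      proof
        fix v assume v: "v \<in> fs ! i"
        then have "v \<in> W" using Weq that by auto
        then obtain u where u: "u \<in> U" "v = g u" using g(1) by (auto simp: bij_betw_def)
        then have "snd (Pd (g u)) = snd (Pq u)" using g(2) by simp
        then have "u \<in> es ! i" using u v that unfolding Pd_def Pq_def by auto
        then show "v \<in> g ` (es ! i)" using u by auto
      qed
    qed
    ultimately show "valid_embedding lq lH es fs"
      unfolding valid_embedding_def using g(1) unfolding U_def W_def k_def by blast
  qed
qed

end
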